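(* Let $P$ be a profile of linear orders on a finite set $A$ which is single-crossing with respect to some tree on its voter set. Let $\mathcal{D}(P)$ be the set of distinct linear orders occurring in $P$. Then $\mathcal{D}(P)$ is a Condorcet domain.
   Context: A profile is a finite tuple of linear orders on $A$, one for each voter; voter $i$ prefers $a$ to $b$, written $a\succ_i b$. Given a tree $T=(V,E)$ whose vertex set $V$ is the set of voters, the profile is single-crossing with respect to $T$ if for every pair of distinct alternatives $a,b$ one of the following holds: (i) there is an edge $e\in E$ such that, removing $e$ from $T$, the two resulting subtrees have vertex sets $V_1,V_2$ with all voters in $V_1$ preferring $a$ to $b$ and all voters in $V_2$ preferring $b$ to $a$; or (ii) all voters prefer $a$ to $b$, or all voters prefer $b$ to $a$. The strict majority relation of a profile: $a\succ b$ iff strictly more voters prefer $a$ to $b$ than prefer $b$ to $a$. A set $C$ of linear orders on $A$ is a Condorcet domain if for every profile (with any finite number of voters) all of whose orders belong to $C$, the strict majority relation of that profile is transitive. *)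

theory Defs
  imports Main
begin

text \<open>A linear order on A, given as the strict preference relation: (a,b) \<in> R means a is preferred to b.\<close>
definition lin_order :: "'a set \<Rightarrow> 'a rel \<Rightarrow> bool" where
  "lin_order A R \<longleftrightarrow> R \<subseteq> A \<times> A \<and> trans R \<and> irrefl R \<and> total_on A R"

definition graph :: "'v set \<Rightarrow> 'v set set \<Rightarrow> bool" where
  "graph V E \<longleftrightarrow> (\<forall>e\<in>E. \<exists>u w. u \<in> V \<and> w \<in> V \<and> u \<noteq> w \<and> e = {u, w})"

definition walk :: "'v set \<Rightarrow> 'v set set \<Rightarrow> 'v list \<Rightarrow> bool" where
  "walk V E xs \<longleftrightarrow> xs \<noteq> [] \<and> set xs \<subseteq> V \<and>
     (\<forall>i. Suc i < length xs \<longrightarrow> {xs ! i, xs ! Suc i} \<in> E)"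

definition reachable :: "'v set \<Rightarrow> 'v set set \<Rightarrow> 'v \<Rightarrow> 'v \<Rightarrow> bool" where
  "reachable V E u w \<longleftrightarrow> (\<exists>xs. walk V E xs \<and> hd xs = u \<and> last xs = w)"

definition component :: "'v set \<Rightarrow> 'v set set \<Rightarrow> 'v \<Rightarrow> 'v set" where
  "component V E u = {w. reachable V E u w}"

definition connected_graph :: "'v set \<Rightarrow> 'v set set \<Rightarrow> bool" where
  "connected_graph V E \<longleftrightarrow> (\<forall>u\<in>V. \<forall>w\<in>V. reachable V E u w)"

definition has_cycle :: "'v set \<Rightarrow> 'v set set \<Rightarrow> bool" where
  "has_cycle V E \<longleftrightarrow> (\<exists>xs. walk V E xs \<and> distinct xs \<and> length xs \<ge> 3 \<and>
      {last xs, hd xs} \<in> E)"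

definition tree :: "'v set \<Rightarrow> 'v set set \<Rightarrow> bool" where
  "tree V E \<longleftrightarrow> finite V \<and> V \<noteq> {} \<and> graph V E \<and> connected_graph V E \<and> \<not> has_cycle V E"

text \<open>Profile P on voters V (each voter has a linear order on A) is single-crossing w.r.t. tree (V,E).
  Removing edge {u,w} gives the two subtrees: components of u and of w in (V, E - {{u,w}}).\<close>
definition single_crossing_tree ::
  "'a set \<Rightarrow> 'v set \<Rightarrow> ('v \<Rightarrow> 'a rel) \<Rightarrow> 'v set set \<Rightarrow> bool" where
  "single_crossing_tree A V P E \<longleftrightarrow>
     (\<forall>a\<in>A. \<forall>b\<in>A. a \<noteq> b \<longrightarrow>
        (\<exists>u w. {u, w} \<in> E \<and>
            (\<forall>x \<in> component V (E - {{u, w}}) u. (a, b) \<in> P x) \<and>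
            (\<forall>x \<in> component V (E - {{u, w}}) w. (b, a) \<in> P x))
        \<or> (\<forall>x\<in>V. (a, b) \<in> P x) \<or> (\<forall>x\<in>V. (b, a) \<in> P x))"

definition majority :: "'a rel list \<Rightarrow> 'a rel" where
  "majority Q = {(a, b). card {i. i < length Q \<and> (b, a) \<in> Q ! i}
                       < card {i. i < length Q \<and> (a, b) \<in> Q ! i}}"

definition condorcet_domain :: "'a set \<Rightarrow> 'a rel set \<Rightarrow> bool" where
  "condorcet_domain A C \<longleftrightarrow> (\<forall>R\<in>C. lin_order A R) \<and>
     (\<forall>Q. set Q \<subseteq> C \<longrightarrow> trans (majority Q))"

end

theory Submission imports Defs begin

lemma walk_all:
  assumes "walk V F xs" "hd xs \<in> X" "\<And>y z. y\<in>X \<Longrightarrow> {y,z}\<in>F \<Longrightarrow> z\<in>V \<Longrightarrow> z\<in>X"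
  shows "\<forall>i<length xs. xs!i \<in> X"
proof (intro allI impI)
  fix i assume "i < length xs"
  then show "xs!i \<in> X"
  proof (induction i)
    case 0
    then show ?case using assms(2) by (simp add: hd_conv_nth)
  next
    case (Suc i)
    then have "xs!i \<in> X" by simp
    moreover have "{xs!i, xs!Suc i} \<in> F" using assms(1) Suc.prems unfolding walk_def by blast
    moreover have "xs!Suc i \<in> V" using assms(1) Suc.prems unfolding walk_def
      by (meson nth_mem subsetD)
    ultimately show ?case using assms(3) by blast
  qed
qed

lemma reach_inv:
  assumes "reachable V F s x" "s \<in> X" "\<And>y z. y\<in>X \<Longrightarrow> {y,z}\<in>F \<Longrightarrow> z\<in>V \<Longrightarrow> z\<in>X"
  shows "x \<in> X"
proof -
  obtain xs where xs: "walk V F xs" "hd xs = s" "last xs = x" using assms(1) unfolding reachable_def by blast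
  have ne: "xs \<noteq> []" using xs(1) unfolding walk_def by blast
  have "\<forall>i<length xs. xs!i \<in> X" using walk_all[OF xs(1)] xs(2) assms(2,3) by blast
  moreover have "last xs = xs ! (length xs - 1)" using ne by (simp add: last_conv_nth)
  ultimately show ?thesis using xs(3) ne by (metis diff_less length_greater_0_conv zero_less_one)
qed

lemma comp_self: "u \<in> V \<Longrightarrow> u \<in> component V F u"
  unfolding component_def reachable_def walk_def
  by (rule CollectI, rule exI[of _ "[u]"]) simp

lemma comp_sub: "component V F u \<subseteq> V"
  unfolding component_def reachable_def walk_def
  by (auto intro: last_in_set)

lemma comp_closed:
  assumes "y \<in> component V F u" "{y,z} \<in> F" "z \<in> V"
  shows "z \<in> component V F u"
proof -
  obtain xs where xs: "walk V F xs" "hd xs = u" "last xs = y"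
    using assms(1) unfolding component_def reachable_def by blast
  have ne: "xs \<noteq> []" using xs(1) unfolding walk_def by blast
  have "walk V F (xs @ [z])"
    unfolding walk_def
  proof (intro conjI allI impI)
    show "xs @ [z] \<noteq> []" by simp
    show "set (xs @ [z]) \<subseteq> V" using xs(1) assms(3) unfolding walk_def by auto
    fix i assume i: "Suc i < length (xs @ [z])"
    show "{(xs @ [z]) ! i, (xs @ [z]) ! Suc i} \<in> F"
    proof (cases "Suc i < length xs")
      case True
      then show ?thesis using xs(1) unfolding walk_def by (simp add: nth_append)
    next
      case False
      then have "i = length xs - 1" "Suc i = length xs" using i by auto
      then show ?thesis using assms(2) xs(3) ne
        by (simp add: nth_append last_conv_nth)
    qed
  qed
  then show ?thesis unfolding component_def reachable_def using xs ne by force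
qed

lemma edge_V: "graph V E \<Longrightarrow> {u,w} \<in> E \<Longrightarrow> u \<in> V \<and> w \<in> V"
  unfolding graph_def by (metis doubleton_eq_iff insertI1)

lemma cover:
  assumes "connected_graph V E" "graph V E" "{u,w} \<in> E"
  shows "V \<subseteq> component V (E - {{u,w}}) u \<union> component V (E - {{u,w}}) w"
proof
  fix v assume v: "v \<in> V"
  have uw: "u \<in> V" "w \<in> V" using edge_V[OF assms(2,3)] by auto
  have "reachable V E u v" using assms(1) v uw unfolding connected_graph_def by blast
  then show "v \<in> component V (E - {{u,w}}) u \<union> component V (E - {{u,w}}) w"
  proof (rule reach_inv)
    show "u \<in> component V (E - {{u,w}}) u \<union> component V (E - {{u,w}}) w"
      using comp_self uw by fast
    fix y z assume y: "y \<in> component V (E - {{u,w}}) u \<union> component V (E - {{u,w}}) w"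
      and yz: "{y,z} \<in> E" and z: "z \<in> V"
    show "z \<in> component V (E - {{u,w}}) u \<union> component V (E - {{u,w}}) w"
    proof (cases "{y,z} = {u,w}")
      case True
      then have "z = u \<or> z = w" by (metis doubleton_eq_iff insertI1 insert_commute)
      then show ?thesis using comp_self uw by fast
    next
      case False
      then have "{y,z} \<in> E - {{u,w}}" using yz by simp
      then show ?thesis using y comp_closed z by fast
    qed
  qed
qed

lemma stay:
  assumes "reachable V (E-{f}) s x" "s \<in> component V (E-{g}) t"
    "\<forall>y. reachable V (E-{f}) s y \<longrightarrow> y \<notin> g"
  shows "x \<in> component V (E-{g}) t"
proof -
  have "x \<in> {y. reachable V (E-{f}) s y \<and> y \<in> component V (E-{g}) t}"
    using assms(1)
  proof (rule reach_inv)
    have "s \<in> V" using assms(2) comp_sub by fast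
    then show "s \<in> {y. reachable V (E-{f}) s y \<and> y \<in> component V (E-{g}) t}"
      using assms(2) comp_self[of s V] unfolding component_def by auto
    fix y z assume y: "y \<in> {y. reachable V (E-{f}) s y \<and> y \<in> component V (E-{g}) t}"
      and yz: "{y,z} \<in> E - {f}" and z: "z \<in> V"
    have r: "reachable V (E-{f}) s z" using comp_closed[of y V "E-{f}" s z] y yz z
      unfolding component_def by auto
    have "y \<notin> g" using y assms(3) by auto
    then have "{y,z} \<noteq> g" by auto
    then have "{y,z} \<in> E - {g}" using yz by auto
    then have "z \<in> component V (E-{g}) t" using comp_closed y z by fast
    then show "z \<in> {y. reachable V (E-{f}) s y \<and> y \<in> component V (E-{g}) t}" using r by auto
  qed
  then show ?thesis by auto
qed

definition halfset :: "'v set \<Rightarrow> 'v set set \<Rightarrow> 'v set \<Rightarrow> bool" where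
  "halfset V E H \<longleftrightarrow> H = {} \<or> H = V \<or> (\<exists>u w. {u,w}\<in>E \<and> H = component V (E-{{u,w}}) u \<and>
     component V (E-{{u,w}}) u \<inter> component V (E-{{u,w}}) w = {} \<and>
     V \<subseteq> component V (E-{{u,w}}) u \<union> component V (E-{{u,w}}) w)"

lemma key:
  assumes g: "graph V E"
    and ei: "{ui,wi}\<in>E" "Hi = component V (E-{{ui,wi}}) ui" "Ki = component V (E-{{ui,wi}}) wi"
     "Hi \<inter> Ki = {}" "V \<subseteq> Hi \<union> Ki"
    and ej: "{uj,wj}\<in>E" "Hj = component V (E-{{uj,wj}}) uj" "Kj = component V (E-{{uj,wj}}) wj"
     "Hj \<inter> Kj = {}" "V \<subseteq> Hj \<union> Kj"
    and x: "x \<in> Hi" "x \<in> Hj" and y: "y \<in> Hi" "y \<in> Hk" and emp: "Hi \<inter> Hj \<inter> Hk = {}"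
  shows "uj \<in> Hi"
proof (rule ccontr)
  assume nu: "uj \<notin> Hi"
  have V: "uj \<in> V" "wj \<in> V" "ui \<in> V" "wi \<in> V" using edge_V[OF g] ei(1) ej(1) by auto
  then have ujK: "uj \<in> Ki" using nu ei(5) by auto
  show False
  proof (cases "{uj,wj} = {ui,wi}")
    case True
    then have "(uj = ui \<and> wj = wi) \<or> (uj = wi \<and> wj = ui)" by (metis doubleton_eq_iff)
    then show False
    proof
      assume "uj = ui \<and> wj = wi"
      then show False using nu ei(2) comp_self[of ui V] V by simp
    next
      assume "uj = wi \<and> wj = ui"
      then have "Hj = Ki" using ej(2) ei(3) True by simp
      then show False using x ei(4) by auto
    qed
  next
    case False
    then have "{uj,wj} \<in> E - {{ui,wi}}" using ej(1) by simp
    then have "{uj,wj} \<in> E - {{ui,wi}}" .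
    then have "wj \<in> Ki" using comp_closed[of uj V "E - {{ui,wi}}" wi wj] ujK ei(3) V by simp
    then have nin: "\<forall>z. reachable V (E-{{ui,wi}}) ui z \<longrightarrow> z \<notin> {uj,wj}"
      using ujK ei(2,4) unfolding component_def by auto
    have "ui \<in> Hj \<or> ui \<in> Kj" using V ej(5) by auto
    then show False
    proof
      assume "ui \<in> Hj"
      then have "Hi \<subseteq> Hj" using stay[of V E "{ui,wi}" ui _ "{uj,wj}" uj] nin ei(2) ej(2)
        unfolding component_def by auto
      then show False using y emp by auto
    next
      assume "ui \<in> Kj"
      then have "Hi \<subseteq> Kj" using stay[of V E "{ui,wi}" ui _ "{uj,wj}" wj] nin ei(2) ej(3)
        unfolding component_def by auto
      then show False using x ej(4) by auto
    qed
  qed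
qed

lemma helly:
  assumes g: "graph V E" and h: "halfset V E H1" "halfset V E H2" "halfset V E H3"
    and x12: "x12 \<in> H1" "x12 \<in> H2" "x12 \<in> V"
    and x13: "x13 \<in> H1" "x13 \<in> H3" "x13 \<in> V"
    and x23: "x23 \<in> H2" "x23 \<in> H3" "x23 \<in> V"
    and emp: "H1 \<inter> H2 \<inter> H3 = {}"
  shows False
proof -
  have ne: "H1 \<noteq> {}" "H2 \<noteq> {}" "H3 \<noteq> {}" using x12 x13 by auto
  have nV: "H1 \<noteq> V" "H2 \<noteq> V" "H3 \<noteq> V" using emp x12 x13 x23 by auto
  obtain u1 w1 where e1: "{u1,w1}\<in>E" "H1 = component V (E-{{u1,w1}}) u1"
     "H1 \<inter> component V (E-{{u1,w1}}) w1 = {}" "V \<subseteq> H1 \<union> component V (E-{{u1,w1}}) w1"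
    using h(1) ne nV unfolding halfset_def by auto
  obtain u2 w2 where e2: "{u2,w2}\<in>E" "H2 = component V (E-{{u2,w2}}) u2"
     "H2 \<inter> component V (E-{{u2,w2}}) w2 = {}" "V \<subseteq> H2 \<union> component V (E-{{u2,w2}}) w2"
    using h(2) ne nV unfolding halfset_def by auto
  obtain u3 w3 where e3: "{u3,w3}\<in>E" "H3 = component V (E-{{u3,w3}}) u3"
     "H3 \<inter> component V (E-{{u3,w3}}) w3 = {}" "V \<subseteq> H3 \<union> component V (E-{{u3,w3}}) w3"
    using h(3) ne nV unfolding halfset_def by auto
  have a: "u3 \<in> H1"
    by (rule key[OF g e1(1,2) refl e1(3,4) e3(1,2) refl e3(3,4) x13(1,2) x12(1,2)]) (use emp in auto)
  have b: "u3 \<in> H2"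
    by (rule key[OF g e2(1,2) refl e2(3,4) e3(1,2) refl e3(3,4) x23(1,2) x12(2,1)]) (use emp in auto)
  have "u3 \<in> H3" using e3(2) comp_self edge_V[OF g e3(1)] by metis
  then show False using a b emp by auto
qed

lemma asym: "lin_order A R \<Longrightarrow> (a,b)\<in>R \<Longrightarrow> (b,a)\<notin>R"
  unfolding lin_order_def trans_def irrefl_def by blast

lemma S_half:
  assumes lin: "\<forall>v\<in>V. lin_order A (P v)" and t: "tree V E" and sc: "single_crossing_tree A V P E"
    and ab: "a\<in>A" "b\<in>A" "a\<noteq>b"
  shows "halfset V E {v\<in>V. (a,b)\<in>P v}"
proof -
  have g: "graph V E" and c: "connected_graph V E" using t unfolding tree_def by auto
  from sc ab consider
    (e) u w where "{u, w} \<in> E" "\<forall>x \<in> component V (E - {{u, w}}) u. (a, b) \<in> P x"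
            "\<forall>x \<in> component V (E - {{u, w}}) w. (b, a) \<in> P x"
    | (all) "\<forall>x\<in>V. (a, b) \<in> P x" | (none) "\<forall>x\<in>V. (b, a) \<in> P x"
    unfolding single_crossing_tree_def by metis
  then show ?thesis
  proof cases
    case (e u w)
    let ?Cu = "component V (E - {{u, w}}) u" and ?Cw = "component V (E - {{u, w}}) w"
    have dj: "?Cu \<inter> ?Cw = {}"
    proof (rule ccontr)
      assume "?Cu \<inter> ?Cw \<noteq> {}"
      then obtain x where "x \<in> ?Cu" "x \<in> ?Cw" by auto
      moreover have "x \<in> V" using \<open>x \<in> ?Cu\<close> comp_sub by fast
      ultimately have "(a,b) \<in> P x" "(b,a) \<in> P x" "lin_order A (P x)" using e lin by auto
      then show False using asym by metis
    qed
    have cv: "V \<subseteq> ?Cu \<union> ?Cw" using cover[OF c g e(1)] .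
    have "{v\<in>V. (a,b)\<in>P v} = ?Cu"
    proof
      show "{v\<in>V. (a,b)\<in>P v} \<subseteq> ?Cu"
      proof
        fix v assume v: "v \<in> {v\<in>V. (a,b)\<in>P v}"
        show "v \<in> ?Cu"
        proof (rule ccontr)
          assume "v \<notin> ?Cu"
          then have "v \<in> ?Cw" using cv v by auto
          then have "(b,a) \<in> P v" "(a,b) \<in> P v" "lin_order A (P v)" using e(3) v lin by auto
          then show False using asym by metis
        qed
      qed
      show "?Cu \<subseteq> {v\<in>V. (a,b)\<in>P v}" using comp_sub[of V "E - {{u, w}}" u] e(2) by auto
    qed
    then show ?thesis unfolding halfset_def using e(1) dj cv by (intro disjI2 exI[of _ u] exI[of _ w]) simp
  next
    case all
    then have "{v\<in>V. (a,b)\<in>P v} = V" by auto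
    then show ?thesis unfolding halfset_def by blast
  next
    case none
    have "\<And>v. v \<in> V \<Longrightarrow> (a,b) \<notin> P v"
    proof -
      fix v assume "v \<in> V"
      then have "(b,a) \<in> P v" "lin_order A (P v)" using none lin by auto
      then show "(a,b) \<notin> P v" using asym by metis
    qed
    then have "{v\<in>V. (a,b)\<in>P v} = {}" by auto
    then show ?thesis unfolding halfset_def by blast
  qed
qed


theorem theorem2:
  fixes A :: "'a set" and V :: "'v set" and P :: "'v \<Rightarrow> 'a rel" and E :: "'v set set"
  assumes "finite A"
    and "\<forall>v\<in>V. lin_order A (P v)"
    and "tree V E"
    and "single_crossing_tree A V P E"
  shows "condorcet_domain A (P ` V)"
  unfolding condorcet_domain_def
proof (intro conjI allI impI)
  show "\<forall>R\<in>P ` V. lin_order A R" using assms(2) by auto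
  fix Q assume Q: "set Q \<subseteq> P ` V"
  have g: "graph V E" using assms(3) unfolding tree_def by auto
  define n where "n = length Q"
  define I where "I x y = {i. i < n \<and> (x,y) \<in> Q!i}" for x y
  have fin: "finite (I x y)" for x y unfolding I_def by auto
  have M: "(x,y) \<in> majority Q \<longleftrightarrow> card (I y x) < card (I x y)" for x y
    unfolding majority_def I_def n_def by auto
  have Qi: "\<exists>v\<in>V. Q!i = P v" if "i < n" for i
  proof -
    have "Q!i \<in> set Q" using that nth_mem[of i Q] unfolding n_def by simp
    then show ?thesis using Q by blast
  qed
  have lin: "lin_order A (Q!i)" if "i < n" for i using Qi[OF that] assms(2) by auto
  have inA: "x \<in> A \<and> y \<in> A" if "(x,y) \<in> majority Q" for x y
  proof -
    have "I x y \<noteq> {}" using that M[of x y] by (metis card.empty less_nat_zero_code)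
    then obtain i where "i < n" "(x,y) \<in> Q!i" unfolding I_def by auto
    then show ?thesis using lin unfolding lin_order_def by auto
  qed
  have comp: "i \<in> I y x" if "x \<in> A" "y \<in> A" "x \<noteq> y" "i < n" "i \<notin> I x y" for x y i
    using lin[OF that(4)] that unfolding lin_order_def total_on_def I_def by auto
  show "trans (majority Q)"
  proof (rule transI)
    fix a b c assume ab: "(a,b) \<in> majority Q" and bc: "(b,c) \<in> majority Q"
    have A: "a \<in> A" "b \<in> A" "c \<in> A" using inA ab bc by auto
    have ab0: "card (I b a) < card (I a b)" using ab M[of a b] by blast
    have bc0: "card (I c b) < card (I b c)" using bc M[of b c] by blast
    have d1: "a \<noteq> b" using ab0 by auto
    have d2: "b \<noteq> c" using bc0 by auto
    have d3: "a \<noteq> c" using ab0 bc0 by auto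
    show "(a,c) \<in> majority Q"
    proof (rule ccontr)
      assume "(a,c) \<notin> majority Q"
      then have ac: "card (I a c) \<le> card (I c a)" using M[of a c] by linarith
      have ab': "card (I b a) < card (I a b)" and bc': "card (I c b) < card (I b c)"
        using ab0 bc0 by auto
      have sub: "I x y \<subseteq> I z w" if "I x y \<inter> I w z = {}" "z \<in> A" "w \<in> A" "z \<noteq> w" for x y z w
      proof
        fix i assume "i \<in> I x y"
        then have "i < n" "i \<notin> I w z" using that(1) unfolding I_def by auto
        then show "i \<in> I z w" using comp[of w z i] that(2,3,4) by auto
      qed
      have c1: "I a b \<inter> I b c \<noteq> {}"
      proof
        assume e: "I a b \<inter> I b c = {}"
        have "I a b \<subseteq> I c b" using sub[of a b b c] e A d2 by auto
        moreover have "I b c \<subseteq> I b a" using sub[of b c a b] e A d1 by auto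
        ultimately have "card (I a b) \<le> card (I c b)" "card (I b c) \<le> card (I b a)" using card_mono[OF fin] by auto
        then show False using ab' bc' by linarith
      qed
      have c2: "I a b \<inter> I c a \<noteq> {}"
      proof
        assume e: "I a b \<inter> I c a = {}"
        have "I a b \<subseteq> I a c" using sub[of a b c a] e A d3 by auto
        moreover have "I c a \<subseteq> I b a" using sub[of c a a b] e A d1 by auto
        ultimately have "card (I a b) \<le> card (I a c)" "card (I c a) \<le> card (I b a)" using card_mono[OF fin] by auto
        then show False using ab' ac by linarith
      qed
      have c3: "I b c \<inter> I c a \<noteq> {}"
      proof
        assume e: "I b c \<inter> I c a = {}"
        have "I b c \<subseteq> I a c" using sub[of b c c a] e A d3 by auto
        moreover have "I c a \<subseteq> I c b" using sub[of c a b c] e A d2 by auto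
        ultimately have "card (I b c) \<le> card (I a c)" "card (I c a) \<le> card (I c b)" using card_mono[OF fin] by auto
        then show False using bc' ac by linarith
      qed
      define S where "S x y = {v\<in>V. (x,y)\<in>P v}" for x y
      have vs: "\<exists>v\<in>V. v \<in> S x y \<and> v \<in> S z w" if ne: "I x y \<inter> I z w \<noteq> {}" for x y z w
      proof -
        obtain i where i: "i < n" "(x,y) \<in> Q!i" "(z,w) \<in> Q!i" using ne unfolding I_def by auto
        obtain v where "v \<in> V" "Q!i = P v" using Qi[OF i(1)] by auto
        then show ?thesis using i unfolding S_def by auto
      qed
      obtain x12 where x12: "x12 \<in> V" "x12 \<in> S a b" "x12 \<in> S b c" using vs[OF c1] by auto
      obtain x13 where x13: "x13 \<in> V" "x13 \<in> S a b" "x13 \<in> S c a" using vs[OF c2] by auto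
      obtain x23 where x23: "x23 \<in> V" "x23 \<in> S b c" "x23 \<in> S c a" using vs[OF c3] by auto
      have emp: "S a b \<inter> S b c \<inter> S c a = {}"
      proof (rule ccontr)
        assume "S a b \<inter> S b c \<inter> S c a \<noteq> {}"
        then obtain v where v: "v \<in> V" "(a,b) \<in> P v" "(b,c) \<in> P v" "(c,a) \<in> P v"
          unfolding S_def by auto
        then have "lin_order A (P v)" using assms(2) by auto
        then show False using v unfolding lin_order_def trans_def irrefl_def by blast
      qed
      have h: "halfset V E (S a b)" "halfset V E (S b c)" "halfset V E (S c a)"
        unfolding S_def using S_half[OF assms(2,3,4)] A d1 d2 d3 by auto
      show False using helly[OF g h x12(2,3,1) x13(2,3,1) x23(2,3,1) emp] .
    qed
  qed
qed
end
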